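(* Let $G=(F\cup C,E)$ be a finite bipartite graph with $F\neq\emptyset$ and no isolated vertices. In one iteration of FacilitySelect on $G$, the expected number of edges removed is at least $\max\{|F|,\,|E|/|F|\}$.
   Context: Let $G=(F\cup C,E)$ be a finite bipartite graph with parts $F$ (facilities) and $C$ (clients). The facility graph $G_F=(F,E_F)$ has an edge $\{i,i'\}$ ($i\ne i'$) iff $i$ and $i'$ have a common neighbor in $G$. Write $\deg(\cdot)$, $N(\cdot)$ for degree/neighborhood in $G$, $\deg_F(\cdot)$, $N_F(\cdot)$ for those in $G_F$. One iteration of FacilitySelect: every $i\in F$ independently draws $r_i$ uniformly from $[0,1]$; let $I=\{i\in F: r_i>\max_{i'\in N_F(i)} r_{i'}\}$ (the maximum over the empty set being $-\infty$); then all vertices of $I\cup N(I)$ are deleted from $G$ together with all their incident edges. "Clients removed" are the clients in $N(I)$; "edges removed" are the edges incident to deleted vertices. FacilitySelect repeats iterations while $F\ne\emptyset$. *)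

theory Defs
  imports "HOL-Probability.Probability"
begin

definition bipartite_graph :: "'v set \<Rightarrow> 'v set \<Rightarrow> ('v \<times> 'v) set \<Rightarrow> bool" where
  "bipartite_graph F C E \<longleftrightarrow> finite F \<and> finite C \<and> F \<inter> C = {} \<and> E \<subseteq> F \<times> C"

definition no_isolated :: "'v set \<Rightarrow> 'v set \<Rightarrow> ('v \<times> 'v) set \<Rightarrow> bool" where
  "no_isolated F C E \<longleftrightarrow> (\<forall>i\<in>F. \<exists>j. (i, j) \<in> E) \<and> (\<forall>j\<in>C. \<exists>i. (i, j) \<in> E)"

definition nbrs :: "('v \<times> 'v) set \<Rightarrow> 'v set \<Rightarrow> 'v set" where
  "nbrs E I = {j. \<exists>i\<in>I. (i, j) \<in> E}"

definition adjF :: "('v \<times> 'v) set \<Rightarrow> 'v \<Rightarrow> 'v \<Rightarrow> bool" where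
  "adjF E i i' \<longleftrightarrow> i \<noteq> i' \<and> (\<exists>j. (i, j) \<in> E \<and> (i', j) \<in> E)"

text \<open>The selected set I: facilities whose value exceeds the values of all G_F-neighbours
  (i.e. exceeds their maximum, with max over the empty set being minus infinity).\<close>
definition selected :: "'v set \<Rightarrow> ('v \<times> 'v) set \<Rightarrow> ('v \<Rightarrow> real) \<Rightarrow> 'v set" where
  "selected F E r = {i \<in> F. \<forall>i'\<in>F. adjF E i i' \<longrightarrow> r i' < r i}"

definition removed_edges :: "'v set \<Rightarrow> ('v \<times> 'v) set \<Rightarrow> ('v \<Rightarrow> real) \<Rightarrow> ('v \<times> 'v) set" where
  "removed_edges F E r =
     {e \<in> E. fst e \<in> selected F E r \<union> nbrs E (selected F E r)
            \<or> snd e \<in> selected F E r \<union> nbrs E (selected F E r)}"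

definition rand_space :: "'v set \<Rightarrow> ('v \<Rightarrow> real) measure" where
  "rand_space F = PiM F (\<lambda>_. uniform_measure lborel {0..1})"

end

theory Submission
  imports Defs
begin

abbreviation "UM \<equiv> uniform_measure lborel {0..1::real}"

lemma probM: "prob_space UM"
  by (rule prob_space_uniform_measure) auto

lemma emeasure_UM_less: "emeasure UM {..<y} = ennreal (max 0 (min 1 y))"
proof -
  have "emeasure UM {..<y} = emeasure lborel ({0..1} \<inter> {..<y})"
    by (simp add: divide_ennreal_def)
  also have "\<dots> = ennreal (max 0 (min 1 y))"
  proof (cases "y < 0")
    case True
    then have "{0..1} \<inter> {..<y} = {}" by auto
    then show ?thesis using True by (simp add: ennreal_neg)
  next
    case False
    show ?thesis
    proof (cases "y \<le> 1")
      case True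
      then have "{0..1} \<inter> {..<y} = {0..<y}" by auto
      then show ?thesis using True False by simp
    next
      case F2: False
      then have "{0..1} \<inter> {..<y} = {0..1}" by auto
      then show ?thesis using F2 False by simp
    qed
  qed
  finally show ?thesis .
qed

lemma deriv_pow_div: "DERIV (\<lambda>x::real. x ^ Suc d / real (Suc d)) x :> x ^ d"
proof -
  have "DERIV (\<lambda>x::real. x ^ Suc d) x :> real (Suc d) * x ^ (Suc d - 1)"
    using DERIV_pow[of "Suc d" x] by simp
  from DERIV_cdivide[OF this, of "real (Suc d)"] show ?thesis by simp
qed

lemma int_pow: "(\<integral>\<^sup>+y. ennreal ((max 0 (min 1 y)) ^ d) \<partial>UM) = ennreal (1 / (real d + 1))"
proof -
  have "(\<integral>\<^sup>+y. ennreal ((max 0 (min 1 y)) ^ d) \<partial>UM)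
     = (\<integral>\<^sup>+y. ennreal ((max 0 (min 1 y)) ^ d) * indicator {0..1} y \<partial>lborel) / emeasure lborel {0..1::real}"
    by (rule nn_integral_uniform_measure) auto
  also have "\<dots> = (\<integral>\<^sup>+y. ennreal (y ^ d) * indicator {0..1} y \<partial>lborel)"
    by (auto simp: divide_ennreal_def intro!: nn_integral_cong split: split_indicator)
  also have "\<dots> = ennreal ((1::real) ^ Suc d / real (Suc d) - 0 ^ Suc d / real (Suc d))"
    apply (rule nn_integral_FTC_Icc[where F="\<lambda>x. x ^ Suc d / real (Suc d)"])
       apply measurable
      apply (rule deriv_pow_div)
     apply auto
    done
  finally show ?thesis by simp
qed

lemma sel_prob:
  fixes F :: "'v set" and A :: "'v set"
  assumes fin: "finite F" and iF: "i \<in> F" and AF: "A \<subseteq> F" and iA: "i \<notin> A"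
  shows "emeasure (PiM F (\<lambda>_. UM)) {r \<in> space (PiM F (\<lambda>_. UM)). \<forall>k\<in>A. r k < r i}
         = ennreal (1 / (real (card A) + 1))"
proof -
  interpret M: prob_space UM by (rule probM)
  interpret P: product_prob_space "\<lambda>_::'v. UM" F
    by (simp add: product_prob_space_def product_prob_space_axioms_def product_sigma_finite_def
        M.prob_space_axioms M.sigma_finite_measure_axioms)
  have U1: "emeasure UM UNIV = 1" using M.emeasure_space_1 by (simp del: emeasure_uniform_measure)
  define S where "S = {r \<in> space (PiM F (\<lambda>_. UM)). \<forall>k\<in>A. r k < r i}"
  have Fi: "F = insert i (F - {i})" using iF by auto
  have finA: "finite A" using fin AF finite_subset by auto
  have comp: "(\<lambda>r. r k) \<in> borel_measurable (PiM F (\<lambda>_. UM))" if "k \<in> F" for k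
  proof -
    have sUM: "sets UM = sets borel" by simp
    have "(\<lambda>r. r k) \<in> measurable (PiM F (\<lambda>_. UM)) UM"
      by (rule measurable_component_singleton[OF that])
    then show ?thesis unfolding measurable_cong_sets[OF refl sUM] .
  qed
  have S_meas: "S \<in> sets (PiM F (\<lambda>_. UM))"
    unfolding S_def
  proof (rule sets.sets_Collect_finite_All[OF _ finA])
    fix k assume "k \<in> A"
    then show "{r \<in> space (PiM F (\<lambda>_. UM)). r k < r i} \<in> sets (PiM F (\<lambda>_. UM))"
      using AF iF comp by (intro borel_measurable_less) auto
  qed
  have "emeasure (PiM F (\<lambda>_. UM)) S = (\<integral>\<^sup>+ r. indicator S r \<partial>PiM F (\<lambda>_. UM))"
    using S_meas by simp
  also have "\<dots> = (\<integral>\<^sup>+ y. (\<integral>\<^sup>+ x. indicator S (x(i := y)) \<partial>PiM (F - {i}) (\<lambda>_. UM)) \<partial>UM)"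
  proof -
    have m: "indicator S \<in> borel_measurable (PiM (insert i (F - {i})) (\<lambda>_. UM))"
      using S_meas by (simp only: insert_Diff[OF iF] borel_measurable_indicator)
    show ?thesis
      using P.product_nn_integral_insert_rev[of "F - {i}" i "indicator S", OF _ _ m] fin
      by (simp only: insert_Diff[OF iF] finite_Diff) simp
  qed
  also have "\<dots> = (\<integral>\<^sup>+ y. ennreal ((max 0 (min 1 y)) ^ card A) \<partial>UM)"
  proof (rule nn_integral_cong)
    fix y :: real
    define B where "B = PiE (F - {i}) (\<lambda>k. if k \<in> A then {..<y} else UNIV)"
    have "(\<integral>\<^sup>+ x. indicator S (x(i := y)) \<partial>PiM (F - {i}) (\<lambda>_. UM))
        = (\<integral>\<^sup>+ x. indicator B x \<partial>PiM (F - {i}) (\<lambda>_. UM))"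
    proof (rule nn_integral_cong)
      fix x assume x: "x \<in> space (PiM (F - {i}) (\<lambda>_. UM))"
      have "x(i := y) \<in> S \<longleftrightarrow> x \<in> B"
        using x iF iA AF unfolding S_def B_def space_PiM by (auto simp: PiE_iff extensional_def)
      then show "indicator S (x(i := y)) = (indicator B x :: ennreal)"
        by (simp add: indicator_def)
    qed
    also have "\<dots> = emeasure (PiM (F - {i}) (\<lambda>_. UM)) B"
      unfolding B_def by (intro nn_integral_indicator) (auto intro!: sets_PiM_I_finite simp: fin)
    also have "\<dots> = (\<Prod>k\<in>F - {i}. emeasure UM (if k \<in> A then {..<y} else UNIV))"
      unfolding B_def by (intro P.emeasure_PiM) (auto simp: fin)
    also have "\<dots> = (\<Prod>k\<in>F - {i}. if k \<in> A then ennreal (max 0 (min 1 y)) else 1)"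
      by (intro prod.cong refl) (auto simp del: emeasure_uniform_measure simp: emeasure_UM_less U1)
    also have "\<dots> = ennreal (max 0 (min 1 y)) ^ card A"
    proof -
      have eq: "(F - {i}) \<inter> {x. x \<in> A} = A" "(F - {i}) \<inter> A = A" using AF iA by auto
      show ?thesis by (simp add: prod.If_cases fin eq)
    qed
    finally show "(\<integral>\<^sup>+ x. indicator S (x(i := y)) \<partial>PiM (F - {i}) (\<lambda>_. UM)) = ennreal ((max 0 (min 1 y)) ^ card A)"
      by (simp only: ennreal_power[OF max.cobounded1])
  qed
  also have "\<dots> = ennreal (1 / (real (card A) + 1))"
    by (rule int_pow)
  finally show ?thesis unfolding S_def .
qed

lemma sel_meas:
  fixes F :: "'v set" and A :: "'v set"
  assumes fin: "finite F" and iF: "i \<in> F" and AF: "A \<subseteq> F"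
  shows "{r \<in> space (PiM F (\<lambda>_. UM)). \<forall>k\<in>A. r k < r i} \<in> sets (PiM F (\<lambda>_. UM))"
proof -
  have finA: "finite A" using fin AF finite_subset by auto
  have comp: "(\<lambda>r. r k) \<in> borel_measurable (PiM F (\<lambda>_. UM))" if "k \<in> F" for k
  proof -
    have sUM: "sets UM = sets borel" by simp
    have "(\<lambda>r. r k) \<in> measurable (PiM F (\<lambda>_. UM)) UM"
      by (rule measurable_component_singleton[OF that])
    then show ?thesis unfolding measurable_cong_sets[OF refl sUM] .
  qed
  show ?thesis
  proof (rule sets.sets_Collect_finite_All[OF _ finA])
    fix k assume "k \<in> A"
    then show "{r \<in> space (PiM F (\<lambda>_. UM)). r k < r i} \<in> sets (PiM F (\<lambda>_. UM))"
      using AF iF comp by (intro borel_measurable_less) auto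
  qed
qed

theorem lemma4:
  fixes F C :: "'v set" and E :: "('v \<times> 'v) set"
  assumes "bipartite_graph F C E"
    and "F \<noteq> {}"
    and "no_isolated F C E"
  shows "(LINT r|rand_space F. real (card (removed_edges F E r)))
           \<ge> max (real (card F)) (real (card E) / real (card F))"
proof -
  have finF: "finite F" and finC: "finite C" and disj: "F \<inter> C = {}" and EFC: "E \<subseteq> F \<times> C"
    using assms(1) unfolding bipartite_graph_def by auto
  have noisoF: "\<And>i. i \<in> F \<Longrightarrow> \<exists>j. (i, j) \<in> E"
    using assms(3) unfolding no_isolated_def by auto
  have finE: "finite E" using finF finC EFC finite_subset by blast
  define NF where "NF i = {k \<in> F. adjF E i k}" for i
  define Nc where "Nc j = {i \<in> F. (i, j) \<in> E}" for j
  define w where "w i = 1 / (real (card (NF i)) + 1)" for i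
  define Sel where "Sel i = {r \<in> space (rand_space F). \<forall>k\<in>NF i. r k < r i}" for i
  have NFsub: "NF i \<subseteq> F - {i}" for i unfolding NF_def adjF_def by auto
  have Sel_meas: "Sel i \<in> sets (rand_space F)" if "i \<in> F" for i
    unfolding Sel_def rand_space_def using sel_meas[OF finF that, of "NF i"] NFsub by auto
  have Sel_prob: "measure (rand_space F) (Sel i) = w i" if "i \<in> F" for i
  proof -
    have "emeasure (rand_space F) (Sel i) = ennreal (w i)"
      unfolding Sel_def rand_space_def w_def using sel_prob[OF finF that, of "NF i"] NFsub by auto
    then show ?thesis by (simp add: measure_def w_def)
  qed
  interpret R: prob_space "rand_space F"
    unfolding rand_space_def by (rule prob_space_PiM) (rule probM)
  have sel_iff: "i \<in> selected F E r \<longleftrightarrow> r \<in> Sel i"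
    if "r \<in> space (rand_space F)" "i \<in> F" for r i
    using that unfolding selected_def Sel_def NF_def by auto
  have pw: "real (card (removed_edges F E r)) = (\<Sum>e\<in>E. \<Sum>i\<in>Nc (snd e). indicator (Sel i) r)"
    if r: "r \<in> space (rand_space F)" for r
  proof -
    let ?sel = "selected F E r"
    have selF: "?sel \<subseteq> F" unfolding selected_def by auto
    have rem: "removed_edges F E r = {e \<in> E. snd e \<in> nbrs E ?sel}"
      using EFC disj selF unfolding removed_edges_def nbrs_def by fastforce
    have one: "(if snd e \<in> nbrs E ?sel then 1 else 0) = (\<Sum>i\<in>Nc (snd e). indicator (Sel i) r :: real)"
      if e: "e \<in> E" for e
    proof -
      define j where "j = snd e"
      have finNc: "finite (Nc j)" unfolding Nc_def using finF by auto
      have "(\<Sum>i\<in>Nc j. indicator (Sel i) r :: real) = (\<Sum>i\<in>Nc j. if i \<in> ?sel then 1 else 0)"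
        using sel_iff[OF r] unfolding Nc_def by (intro sum.cong) (auto simp: indicator_def)
      also have "\<dots> = real (card {i \<in> Nc j. i \<in> ?sel})"
        using finNc by (simp add: sum.inter_filter[symmetric])
      also have "card {i \<in> Nc j. i \<in> ?sel} = (if j \<in> nbrs E ?sel then 1 else 0)"
      proof -
        have le1: "card {i \<in> Nc j. i \<in> ?sel} \<le> Suc 0"
        proof (subst card_le_Suc0_iff_eq)
          show "finite {i \<in> Nc j. i \<in> ?sel}" using finNc by auto
          show "\<forall>a\<in>{i \<in> Nc j. i \<in> ?sel}. \<forall>b\<in>{i \<in> Nc j. i \<in> ?sel}. a = b"
          proof (intro ballI, rule ccontr)
            fix a b assume a: "a \<in> {i \<in> Nc j. i \<in> ?sel}" and b: "b \<in> {i \<in> Nc j. i \<in> ?sel}" and ne: "a \<noteq> b"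
            have ab: "adjF E a b" "adjF E b a" using a b ne unfolding Nc_def adjF_def by auto
            have "r b < r a" using a b ab unfolding selected_def Nc_def by auto
            moreover have "r a < r b" using a b ab unfolding selected_def Nc_def by auto
            ultimately show False by simp
          qed
        qed
        have ne: "{i \<in> Nc j. i \<in> ?sel} \<noteq> {} \<longleftrightarrow> j \<in> nbrs E ?sel"
          using selF unfolding Nc_def nbrs_def by auto
        show ?thesis using le1 ne finNc
          by (cases "j \<in> nbrs E ?sel") (auto simp: le_Suc_eq card_gt_0_iff)
      qed
      finally show ?thesis unfolding j_def by simp
    qed
    have "real (card (removed_edges F E r)) = (\<Sum>e\<in>E. if snd e \<in> nbrs E ?sel then 1 else 0)"
      unfolding rem using finE by (simp add: sum.inter_filter[symmetric])
    also have "\<dots> = (\<Sum>e\<in>E. \<Sum>i\<in>Nc (snd e). indicator (Sel i) r)"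
      using one by (intro sum.cong) auto
    finally show ?thesis .
  qed
  have "(LINT r|rand_space F. real (card (removed_edges F E r)))
      = (LINT r|rand_space F. (\<Sum>e\<in>E. \<Sum>i\<in>Nc (snd e). indicator (Sel i) r))"
    using pw by (intro Bochner_Integration.integral_cong) auto
  also have "\<dots> = (\<Sum>e\<in>E. \<Sum>i\<in>Nc (snd e). w i)"
  proof -
    have NcF: "Nc j \<subseteq> F" for j unfolding Nc_def by auto
    have int: "integrable (rand_space F) (indicator (Sel i) :: _ \<Rightarrow> real)" if "i \<in> F" for i
      using Sel_meas[OF that] by (intro integrable_real_indicator) (auto simp: R.emeasure_finite less_top[symmetric])
    have int2: "integrable (rand_space F) (\<lambda>r. \<Sum>i\<in>Nc (snd e). indicator (Sel i) r :: real)" for e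
      using int NcF by (intro Bochner_Integration.integrable_sum) auto
    have each: "(LINT r|rand_space F. (\<Sum>i\<in>Nc (snd e). indicator (Sel i) r :: real)) = (\<Sum>i\<in>Nc (snd e). w i)" for e :: "'v \<times> 'v"
    proof -
      have "(LINT r|rand_space F. (\<Sum>i\<in>Nc (snd e). indicator (Sel i) r :: real))
          = (\<Sum>i\<in>Nc (snd e). (LINT r|rand_space F. indicator (Sel i) r :: real))"
        by (rule Bochner_Integration.integral_sum) (use int NcF in auto)
      also have "\<dots> = (\<Sum>i\<in>Nc (snd e). w i)"
      proof (rule sum.cong[OF refl])
        fix i assume "i \<in> Nc (snd e)"
        then have iF: "i \<in> F" using NcF by auto
        have "Sel i \<inter> space (rand_space F) = Sel i" using Sel_meas[OF iF] sets.sets_into_space by auto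
        then show "(LINT r|rand_space F. indicator (Sel i) r) = w i"
          using Sel_prob[OF iF] by simp
      qed
      finally show ?thesis .
    qed
    have "(LINT r|rand_space F. (\<Sum>e\<in>E. \<Sum>i\<in>Nc (snd e). indicator (Sel i) r :: real))
        = (\<Sum>e\<in>E. (LINT r|rand_space F. (\<Sum>i\<in>Nc (snd e). indicator (Sel i) r :: real)))"
      using int2 by (intro Bochner_Integration.integral_sum) auto
    also have "\<dots> = (\<Sum>e\<in>E. \<Sum>i\<in>Nc (snd e). w i)"
      using each by simp
    finally show ?thesis .
  qed
  finally have EQ: "(LINT r|rand_space F. real (card (removed_edges F E r))) = (\<Sum>e\<in>E. \<Sum>i\<in>Nc (snd e). w i)" .
  have wpos: "w i > 0" for i unfolding w_def by auto
  have cardNF: "card (NF i) + 1 \<le> card F" if "i \<in> F" for i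
  proof -
    have "card (NF i) \<le> card (F - {i})" using NFsub finF by (intro card_mono) auto
    then show ?thesis using that finF by (simp add: card_Diff_singleton) (metis Suc_pred card_gt_0_iff empty_iff le_SucI Suc_le_mono that)
  qed
  have B2: "real (card E) / real (card F) \<le> (\<Sum>e\<in>E. \<Sum>i\<in>Nc (snd e). w i)"
  proof -
    have "real (card E) / real (card F) = (\<Sum>e\<in>E. 1 / real (card F))" by simp
    also have "\<dots> \<le> (\<Sum>e\<in>E. \<Sum>i\<in>Nc (snd e). w i)"
    proof (rule sum_mono)
      fix e assume e: "e \<in> E"
      then have feF: "fst e \<in> F" and feN: "fst e \<in> Nc (snd e)" using EFC unfolding Nc_def by auto
      have "1 / real (card F) \<le> w (fst e)"
        unfolding w_def using cardNF[OF feF] 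
        by (intro divide_left_mono) (auto simp: of_nat_le_iff[symmetric])
      also have "\<dots> \<le> (\<Sum>i\<in>Nc (snd e). w i)"
        using feN finF wpos unfolding Nc_def by (intro member_le_sum) (auto intro: less_imp_le)
      finally show "1 / real (card F) \<le> (\<Sum>i\<in>Nc (snd e). w i)" .
    qed
    finally show ?thesis .
  qed
  have B1: "real (card F) \<le> (\<Sum>e\<in>E. \<Sum>i\<in>Nc (snd e). w i)"
  proof -
    have "(\<Sum>e\<in>E. \<Sum>i\<in>Nc (snd e). w i) = (\<Sum>i\<in>F. \<Sum>e\<in>{e \<in> E. (i, snd e) \<in> E}. w i)"
      unfolding Nc_def using finE finF by (rule sum.swap_restrict)
    also have "\<dots> = (\<Sum>i\<in>F. real (card {e \<in> E. (i, snd e) \<in> E}) * w i)" by simp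
    also have "\<dots> \<ge> (\<Sum>i\<in>F. 1)"
    proof (rule sum_mono)
      fix i assume iF: "i \<in> F"
      have "insert i (NF i) \<subseteq> fst ` {e \<in> E. (i, snd e) \<in> E}"
      proof
        fix k assume "k \<in> insert i (NF i)"
        then show "k \<in> fst ` {e \<in> E. (i, snd e) \<in> E}"
        proof
          assume "k = i"
          then obtain j where "(i, j) \<in> E" using noisoF iF by blast
          then show ?thesis using \<open>k = i\<close> by (auto intro!: image_eqI[where x="(i,j)"])
        next
          assume "k \<in> NF i"
          then obtain j where "(i, j) \<in> E" "(k, j) \<in> E" unfolding NF_def adjF_def by auto
          then show ?thesis by (auto intro!: image_eqI[where x="(k,j)"])
        qed
      qed
      then have "card (insert i (NF i)) \<le> card (fst ` {e \<in> E. (i, snd e) \<in> E})"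
        using finE by (intro card_mono) auto
      also have "\<dots> \<le> card {e \<in> E. (i, snd e) \<in> E}" using finE by (intro card_image_le) auto
      finally have c0: "card (insert i (NF i)) \<le> card {e \<in> E. (i, snd e) \<in> E}" .
      have c: "card (NF i) + 1 \<le> card {e \<in> E. (i, snd e) \<in> E}"
      proof -
        have "i \<notin> NF i" using NFsub[of i] by auto
        moreover have "finite (NF i)" using finF finite_subset[OF NFsub] by auto
        ultimately show ?thesis using c0 by simp
      qed
      have "1 = (real (card (NF i)) + 1) * w i" unfolding w_def by simp
      also have "\<dots> \<le> real (card {e \<in> E. (i, snd e) \<in> E}) * w i"
        using c wpos[of i] by (intro mult_right_mono) (auto simp: of_nat_le_iff[symmetric] less_imp_le)
      finally show "1 \<le> real (card {e \<in> E. (i, snd e) \<in> E}) * w i" .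
    qed
    finally show ?thesis by simp
  qed
  show ?thesis unfolding EQ using B1 B2 by simp
qed

end
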